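(* Let $A\subseteq\mathbb{N}$. Then there exists a subset $B\subseteq A$ such that $B\in\mathcal{D}$ and $d(B)=\underline{\underline{d}}(A)$. Similarly, there exists a superset $C\supseteq A$ such that $C\in\mathcal{D}$ and $d(C)=\overline{\overline{d}}(A)$.
   Context: $\mathbb{N}=\{1,2,3,\dots\}$. For $A\subseteq\mathbb{N}$ let $A(n)=|A\cap[1,n]|$. Let $\mathcal{D}$ be the collection of all $A\subseteq\mathbb{N}$ for which the asymptotic density $d(A)=\lim_{n\to\infty}\frac{A(n)}{n}$ exists. Define $\underline{\underline{d}}(A)=\sup\{d(B);\ B\subseteq A,\ B\in\mathcal{D}\}$ and $\overline{\overline{d}}(A)=\inf\{d(C);\ C\supseteq A,\ C\in\mathcal{D}\}$. *)

theory Defs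
  imports "HOL-Analysis.Analysis"
begin

text \<open>The paper's natural numbers are {1,2,3,...}; we model subsets of this as
  sets of type nat set contained in {1..}.\<close>

definition counting :: "nat set \<Rightarrow> nat \<Rightarrow> nat" where
  "counting A n = card (A \<inter> {1..n})"

definition has_density :: "nat set \<Rightarrow> real \<Rightarrow> bool" where
  "has_density A \<delta> \<longleftrightarrow> ((\<lambda>n. real (counting A n) / real n) \<longlongrightarrow> \<delta>) sequentially"

definition Dcal :: "nat set set" where
  "Dcal = {A. A \<subseteq> {1..} \<and> (\<exists>\<delta>. has_density A \<delta>)}"

definition density :: "nat set \<Rightarrow> real" where
  "density A = lim (\<lambda>n. real (counting A n) / real n)"

definition lower_dd :: "nat set \<Rightarrow> real" where
  "lower_dd A = Sup {density B | B. B \<subseteq> A \<and> B \<in> Dcal}"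

definition upper_dd :: "nat set \<Rightarrow> real" where
  "upper_dd A = Inf {density C | C. A \<subseteq> C \<and> C \<in> Dcal}"

end

theory Submission
  imports Defs
begin

lemma approx_ev:
  assumes "has_density S d" "e > 0"
  shows "\<forall>\<^sub>F m in sequentially. \<bar>real (counting S m) - d * real m\<bar> \<le> e * real m"
proof -
  from assms(1) have "(\<lambda>n. real (counting S n)/real n) \<longlonglongrightarrow> d" by (simp add: has_density_def)
  hence "\<forall>\<^sub>F n in sequentially. dist (real (counting S n)/real n) d < e" using assms(2) tendstoD by blast
  moreover have "\<forall>\<^sub>F n in sequentially. n \<ge> (1::nat)" by (simp add: eventually_ge_at_top)
  ultimately show ?thesis
  proof eventually_elim
    case (elim n)
    then have 1: "\<bar>real (counting S n)/n - d\<bar> < e" by (simp add: dist_real_def)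
    have "real (counting S n) - d*n = real n * (real (counting S n)/ real n - d)"
      using elim(2) by (simp add: field_simps)
    hence "\<bar>real (counting S n) - d*n\<bar> = real n * \<bar>real (counting S n)/ real n - d\<bar>"
      by (simp add: abs_mult)
    also have "\<dots> \<le> real n * e" using 1 by (intro mult_left_mono) auto
    finally show ?case by (simp add: mult.commute)
  qed
qed

lemma glue:
  fixes S :: "nat \<Rightarrow> nat set" and d :: "nat \<Rightarrow> real" and s :: real
  assumes dens: "\<And>k. has_density (S k) (d k)"
  and close: "\<And>k. \<bar>d k - s\<bar> \<le> 1/(real k+1)"
  shows "\<exists>B. B \<subseteq> (\<Union>k. S k) \<and> has_density B s"
proof -
  define c where "c = (\<lambda>k m. real (counting (S k) m))"
  define Q where "Q = (\<lambda>(n::nat) (x::nat) (y::nat). y \<ge> (n+1)*x + 1 \<and>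
      (\<forall>m\<ge>y. \<bar>c n m - d n * m\<bar> \<le> m/(real n+1) \<and> \<bar>c (Suc n) m - d (Suc n) * m\<bar> \<le> m/(real n+1)))"
  have "\<exists>N. \<forall>n. (n = 0 \<longrightarrow> N n = 0) \<and> Q n (N n) (N (Suc n))"
  proof (rule dependent_nat_choice)
    show "\<exists>x. 0 = 0 \<longrightarrow> x = (0::nat)" by auto
  next
    fix x n
    have e: "(1::real)/(real n+1) > 0" by simp
    have "\<forall>\<^sub>F m in sequentially. (\<bar>c n m - d n * m\<bar> \<le> 1/(real n+1) * m \<and> \<bar>c (Suc n) m - d (Suc n) * m\<bar> \<le> 1/(real n+1) * m)"
      unfolding c_def using approx_ev[OF dens e] eventually_conj by blast
    then obtain M where M: "\<And>m. m \<ge> M \<Longrightarrow> \<bar>c n m - d n * m\<bar> \<le> 1/(real n+1) * m \<and> \<bar>c (Suc n) m - d (Suc n) * m\<bar> \<le> 1/(real n+1) * m"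
      unfolding eventually_sequentially by blast
    show "\<exists>y. (Suc n = 0 \<longrightarrow> y = 0) \<and> Q n x y"
      apply (rule exI[of _ "max M ((n+1)*x+1)"])
      using M unfolding Q_def by auto
  qed
  then obtain N where N0: "N 0 = 0" and NQ: "\<And>n. Q n (N n) (N (Suc n))" by blast
  have Ngrow: "(n+1) * N n + 1 \<le> N (Suc n)" for n using NQ[of n] unfolding Q_def by auto
  have Napp: "\<And>m. m \<ge> N (Suc n) \<Longrightarrow> \<bar>c n m - d n * m\<bar> \<le> m/(real n+1) \<and> \<bar>c (Suc n) m - d (Suc n) * m\<bar> \<le> m/(real n+1)" for n
    using NQ[of n] unfolding Q_def by auto
  have smN: "strict_mono N"
  proof (rule strict_mono_Suc_iff[THEN iffD2], intro allI)
    fix n have "N n \<le> (n+1) * N n" by simp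
    thus "N n < N (Suc n)" using Ngrow[of n] by linarith
  qed
  have Nge: "n \<le> N n" for n using strict_mono_imp_increasing[OF smN] by simp
  define B where "B = {m. \<exists>j. N j < m \<and> m \<le> N (Suc j) \<and> m \<in> S j}"
  have BS: "B \<subseteq> (\<Union>k. S k)" unfolding B_def by auto
  have est: "\<bar>real (counting B n) - s * n\<bar> \<le> 7 * (1/(real k+1) * n)"
    if k1: "N (Suc k) < n" and k2: "n \<le> N (Suc (Suc k))" for k n
  proof -
    define N' where "N' = N (Suc k)"
    define N0 where "N0 = N k"
    define X1 where "X1 = S k \<inter> {1..N'}"
    define X2 where "X2 = S (Suc k) \<inter> {1..n} - {1..N'}"
    have sub: "B \<inter> {1..n} \<subseteq> {1..N0} \<union> X1 \<union> X2"
    proof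
      fix m assume m: "m \<in> B \<inter> {1..n}"
      then obtain j where j: "N j < m" "m \<le> N (Suc j)" "m \<in> S j" unfolding B_def by auto
      have "j \<le> Suc k"
      proof (rule ccontr)
        assume "\<not> j \<le> Suc k" hence "Suc (Suc k) \<le> j" by simp
        hence "N (Suc (Suc k)) \<le> N j" using smN strict_mono_less_eq by blast
        thus False using j k2 m by auto
      qed
      hence "j = Suc k \<or> j = k \<or> j < k" by auto
      thus "m \<in> {1..N0} \<union> X1 \<union> X2"
      proof (elim disjE)
        assume "j = Suc k" thus ?thesis using j m unfolding X2_def N'_def by auto
      next
        assume "j = k" thus ?thesis using j m unfolding X1_def N'_def by auto
      next
        assume "j < k" hence "Suc j \<le> k" by simp
        hence "N (Suc j) \<le> N k" using smN strict_mono_less_eq by blast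
        thus ?thesis using j m unfolding N0_def by auto
      qed
    qed
    have sup: "(X1 - {1..N0}) \<union> X2 \<subseteq> B \<inter> {1..n}"
    proof
      fix m assume "m \<in> (X1 - {1..N0}) \<union> X2"
      thus "m \<in> B \<inter> {1..n}"
      proof
        assume "m \<in> X1 - {1..N0}"
        hence "N k < m" "m \<le> N (Suc k)" "m \<in> S k" "m \<ge> 1" unfolding X1_def N0_def N'_def by auto
        thus ?thesis unfolding B_def using k1 by auto
      next
        assume "m \<in> X2"
        hence "N (Suc k) < m" "m \<le> n" "m \<in> S (Suc k)" "m \<ge> 1" unfolding X2_def N'_def by auto
        thus ?thesis unfolding B_def using k2 by auto
      qed
    qed
    have cB_up: "counting B n \<le> N0 + card X1 + card X2"
    proof -
      have "counting B n \<le> card ({1..N0} \<union> X1 \<union> X2)"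
        unfolding counting_def by (rule card_mono[OF _ sub]) (auto simp: X1_def X2_def)
      also have "\<dots> \<le> card ({1..N0} \<union> X1) + card X2" by (rule card_Un_le)
      also have "\<dots> \<le> N0 + card X1 + card X2" using card_Un_le[of "{1..N0}" X1] by simp
      finally show ?thesis .
    qed
    have cB_low: "card (X1 - {1..N0}) + card X2 \<le> counting B n"
    proof -
      have d: "(X1 - {1..N0}) \<inter> X2 = {}" unfolding X1_def X2_def by auto
      have "card (X1 - {1..N0}) + card X2 = card ((X1 - {1..N0}) \<union> X2)"
        by (rule card_Un_disjoint[symmetric]) (auto simp: X1_def X2_def d)
      also have "\<dots> \<le> counting B n" unfolding counting_def by (rule card_mono[OF _ sup]) auto
      finally show ?thesis .
    qed
    have X1d: "card X1 \<le> card (X1 - {1..N0}) + N0"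
    proof -
      have "card X1 \<le> card ((X1 - {1..N0}) \<union> {1..N0})" by (rule card_mono) (auto simp: X1_def)
      also have "\<dots> \<le> card (X1 - {1..N0}) + card {1..N0}" by (rule card_Un_le)
      finally show ?thesis by simp
    qed
    have X1c: "card X1 = counting (S k) N'" unfolding X1_def counting_def by (simp add: Int_commute)
    have X2c: "card X2 + counting (S (Suc k)) N' = counting (S (Suc k)) n"
    proof -
      have eq: "S (Suc k) \<inter> {1..n} = X2 \<union> (S (Suc k) \<inter> {1..N'})" using k1 unfolding X2_def N'_def by auto
      have "counting (S (Suc k)) n = card (X2 \<union> (S (Suc k) \<inter> {1..N'}))" unfolding counting_def eq ..
      also have "\<dots> = card X2 + card (S (Suc k) \<inter> {1..N'})"
        by (rule card_Un_disjoint) (auto simp: X2_def)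
      finally show ?thesis unfolding counting_def by simp
    qed
    define u where "u = 1/(real k+1)"
    have u0: "u \<ge> 0" unfolding u_def by simp
    have a1: "\<bar>c k N' - d k * N'\<bar> \<le> u * N'" using Napp[of k N'] unfolding N'_def u_def by simp
    have a2: "\<bar>c (Suc k) N' - d (Suc k) * N'\<bar> \<le> u * N'" using Napp[of k N'] unfolding N'_def u_def by simp
    have a3: "\<bar>c (Suc k) n - d (Suc k) * n\<bar> \<le> u * n" using Napp[of k n] k1 unfolding N'_def u_def by simp
    have dk: "\<bar>d k - s\<bar> \<le> u" using close[of k] unfolding u_def by simp
    have dk1: "\<bar>d (Suc k) - s\<bar> \<le> u" using close[of "Suc k"] unfolding u_def
      by (smt (verit, best) frac_le of_nat_Suc of_nat_0_le_iff)
    have p1: "\<bar>d k * N' - s * N'\<bar> \<le> u * N'"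
    proof -
      have "\<bar>d k * N' - s * N'\<bar> = \<bar>d k - s\<bar> * N'" by (simp add: abs_mult left_diff_distrib[symmetric])
      thus ?thesis using dk by (simp add: mult_right_mono)
    qed
    have p2: "\<bar>d (Suc k) * N' - s * N'\<bar> \<le> u * N'"
    proof -
      have "\<bar>d (Suc k) * N' - s * N'\<bar> = \<bar>d (Suc k) - s\<bar> * N'" by (simp add: abs_mult left_diff_distrib[symmetric])
      thus ?thesis using dk1 by (simp add: mult_right_mono)
    qed
    have p3: "\<bar>d (Suc k) * n - s * n\<bar> \<le> u * n"
    proof -
      have "\<bar>d (Suc k) * n - s * n\<bar> = \<bar>d (Suc k) - s\<bar> * n" by (simp add: abs_mult left_diff_distrib[symmetric])
      thus ?thesis using dk1 by (simp add: mult_right_mono)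
    qed
    have "real N' \<le> real n" using k1 unfolding N'_def by simp
    hence p4: "u * N' \<le> u * n" using u0 by (rule mult_left_mono)
    have p5: "real N0 \<le> u * N'"
    proof -
      have "(k + 1) * N0 \<le> N'" using Ngrow[of k] unfolding N0_def N'_def by linarith
      hence "real ((k + 1) * N0) \<le> real N'" by (simp only: of_nat_le_iff)
      hence "(real k + 1) * N0 \<le> N'" by (simp add: algebra_simps)
      thus ?thesis unfolding u_def by (simp add: field_simps)
    qed
    have r1: "real (counting B n) \<le> N0 + c k N' + c (Suc k) n - c (Suc k) N'"
      using cB_up X1c X2c unfolding c_def
      by (smt (verit) of_nat_add of_nat_le_iff)
    have r2: "real (counting B n) \<ge> c k N' - N0 + c (Suc k) n - c (Suc k) N'"
      using cB_low X1c X2c X1d unfolding c_def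
      by (smt (verit) of_nat_add of_nat_le_iff)
    have "\<bar>real (counting B n) - s * n\<bar> \<le> 7 * (u * n)"
      using r1 r2 a1 a2 a3 p1 p2 p3 p4 p5 by linarith
    thus ?thesis unfolding u_def .
  qed
  have "(\<lambda>n. real (counting B n) / real n) \<longlonglongrightarrow> s"
  proof (rule LIMSEQ_I)
    fix r :: real assume r: "0 < r"
    then obtain K where K: "K > 0" "inverse (real K) < r/7" using ex_inverse_of_nat_less[of "r/7"] by auto
    have uK: "1/(real K + 1) < r/7"
      using K by (smt (verit) frac_le inverse_eq_divide of_nat_0_less_iff)
    show "\<exists>no. \<forall>n\<ge>no. norm (real (counting B n) / real n - s) < r"
    proof (intro exI allI impI)
      fix n assume n: "n \<ge> Suc (N (Suc K))"
      define j where "j = (LEAST j. n \<le> N j)"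
      have ex: "n \<le> N n" by (rule Nge)
      have j1: "n \<le> N j" unfolding j_def by (rule LeastI[where P="\<lambda>j. n \<le> N j" and k=n, OF ex])
      have j2: "\<And>i. i < j \<Longrightarrow> \<not> n \<le> N i" unfolding j_def by (rule not_less_Least)
      have NK1: "N 1 \<le> N (Suc K)" using smN strict_mono_less_eq[of N 1 "Suc K"] by simp
      have "j \<noteq> 0"
      proof
        assume "j = 0" with j1 N0 have "n \<le> 0" by simp
        with n show False by simp
      qed
      moreover have "j \<noteq> 1"
      proof
        assume "j = 1" with j1 have "n \<le> N 1" by simp
        with n NK1 show False by simp
      qed
      ultimately obtain k where jk: "j = Suc (Suc k)" by (metis One_nat_def not0_implies_Suc)
      have k1: "N (Suc k) < n" using j2[of "Suc k"] jk by simp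
      have k2: "n \<le> N (Suc (Suc k))" using j1 jk by simp
      have "K \<le> k"
      proof (rule ccontr)
        assume "\<not> K \<le> k" hence "Suc (Suc k) \<le> Suc K" by simp
        hence "N (Suc (Suc k)) \<le> N (Suc K)" using smN strict_mono_less_eq by blast
        thus False using k2 n by simp
      qed
      hence uk: "1/(real k+1) \<le> 1/(real K+1)" by (simp add: frac_le)
      have npos: "real n > 0" using n by simp
      have e: "\<bar>real (counting B n) - s * n\<bar> \<le> 7 * (1/(real k+1) * n)" by (rule est[OF k1 k2])
      have "norm (real (counting B n) / real n - s) = \<bar>real (counting B n) - s * n\<bar> / n"
        using npos by (simp add: field_simps)
      also have "\<dots> \<le> 7 * (1/(real k+1))" using e npos by (simp add: field_simps)
      also have "\<dots> < r" using uk uK by linarith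
      finally show "norm (real (counting B n) / real n - s) < r" .
    qed
  qed
  thus ?thesis using BS unfolding has_density_def by blast
qed

lemma density_eq: "has_density A d \<Longrightarrow> density A = d"
  unfolding has_density_def density_def by (rule limI)

lemma counting_le: "counting A n \<le> n"
proof -
  have "card (A \<inter> {1..n}) \<le> card {1..n}" by (rule card_mono) auto
  thus ?thesis unfolding counting_def by simp
qed

lemma density_le1: "has_density A d \<Longrightarrow> d \<le> 1"
  unfolding has_density_def
proof (rule LIMSEQ_le_const2)
  show "\<exists>N. \<forall>n\<ge>N. real (counting A n) / real n \<le> 1"
  proof (intro exI allI impI)
    fix n :: nat assume "n \<ge> 1"
    thus "real (counting A n) / real n \<le> 1" using counting_le[of A n] by simp
  qed
qed

lemma bdd_dens: "bdd_above {density B | B. B \<subseteq> A \<and> B \<in> Dcal}"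
  unfolding bdd_above_def
proof (intro exI ballI)
  fix x assume "x \<in> {density B | B. B \<subseteq> A \<and> B \<in> Dcal}"
  then obtain B d where "x = density B" "has_density B d" unfolding Dcal_def by auto
  thus "x \<le> 1" using density_eq density_le1 by auto
qed

lemma empty_dens: "has_density {} 0"
  unfolding has_density_def counting_def by simp

lemma compl_density:
  assumes "A \<subseteq> {1..}" "has_density A d"
  shows "has_density ({1..} - A) (1 - d)"
proof -
  have c: "counting ({1..} - A) n = n - counting A n" for n
  proof -
    have "({1..} - A) \<inter> {1..n} = {1..n} - (A \<inter> {1..n})" by auto
    hence "counting ({1..} - A) n = card ({1..n} - (A \<inter> {1..n}))" unfolding counting_def by simp
    also have "\<dots> = n - counting A n" unfolding counting_def by (subst card_Diff_subset) auto
    finally show ?thesis .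
  qed
  have "(\<lambda>n. 1 - real (counting A n) / real n) \<longlonglongrightarrow> 1 - d"
    using assms(2) unfolding has_density_def by (intro tendsto_diff tendsto_const)
  moreover have "\<forall>\<^sub>F n in sequentially. 1 - real (counting A n) / real n = real (counting ({1..} - A) n) / real n"
    unfolding eventually_sequentially
  proof (intro exI allI impI)
    fix n :: nat assume n: "n \<ge> 1"
    have "real (counting ({1..} - A) n) = real n - real (counting A n)"
      unfolding c using counting_le[of A n] by (simp add: of_nat_diff)
    thus "1 - real (counting A n) / real n = real (counting ({1..} - A) n) / real n"
      using n by (simp add: field_simps)
  qed
  ultimately show ?thesis unfolding has_density_def by (rule Lim_transform_eventually)
qed

lemma lower_exists:
  assumes "A \<subseteq> {1..}"
  shows "\<exists>B. B \<subseteq> A \<and> B \<in> Dcal \<and> density B = lower_dd A"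
proof -
  define X where "X = {density B | B. B \<subseteq> A \<and> B \<in> Dcal}"
  define s where "s = Sup X"
  have "{} \<in> Dcal" unfolding Dcal_def using empty_dens by auto
  hence "density {} \<in> X" unfolding X_def by blast
  hence ne: "X \<noteq> {}" by auto
  have bdd: "bdd_above X" unfolding X_def by (rule bdd_dens)
  have "\<forall>k. \<exists>B. B \<subseteq> A \<and> B \<in> Dcal \<and> s - 1/(real k+1) < density B"
  proof
    fix k :: nat
    have "s - 1/(real k+1) < Sup X" unfolding s_def by simp
    then obtain x where "x \<in> X" "s - 1/(real k+1) < x" using less_cSup_iff[OF ne bdd] by blast
    thus "\<exists>B. B \<subseteq> A \<and> B \<in> Dcal \<and> s - 1/(real k+1) < density B" unfolding X_def by blast
  qed
  then obtain S where S: "\<And>k. S k \<subseteq> A" "\<And>k. S k \<in> Dcal" "\<And>k. s - 1/(real k+1) < density (S k)"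
    by metis
  have hd: "has_density (S k) (density (S k))" for k
    using S(2)[of k] density_eq unfolding Dcal_def by auto
  have le: "density (S k) \<le> s" for k
    unfolding s_def using S(1,2) by (intro cSup_upper[OF _ bdd]) (auto simp: X_def)
  have cl: "\<bar>density (S k) - s\<bar> \<le> 1/(real k+1)" for k using le[of k] S(3)[of k] by linarith
  obtain B where B: "B \<subseteq> (\<Union>k. S k)" "has_density B s" using glue[OF hd cl] by blast
  have BA: "B \<subseteq> A" using B(1) S(1) by blast
  hence "B \<in> Dcal" using assms B(2) unfolding Dcal_def by auto
  moreover have "density B = lower_dd A" using density_eq[OF B(2)] unfolding s_def X_def lower_dd_def by simp
  ultimately show ?thesis using BA by blast
qed

theorem lemma3p7:
  fixes A :: "nat set"
  assumes "A \<subseteq> {1..}"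
  shows "(\<exists>B. B \<subseteq> A \<and> B \<in> Dcal \<and> density B = lower_dd A)
       \<and> (\<exists>C. A \<subseteq> C \<and> C \<in> Dcal \<and> density C = upper_dd A)"
proof
  show "\<exists>B. B \<subseteq> A \<and> B \<in> Dcal \<and> density B = lower_dd A" using lower_exists[OF assms] .
  define A' where "A' = {1..} - A"
  obtain B' where B': "B' \<subseteq> A'" "B' \<in> Dcal" "density B' = lower_dd A'"
    using lower_exists[of A'] unfolding A'_def by auto
  have B1: "B' \<subseteq> {1..}" using B' unfolding A'_def by auto
  have hB: "has_density B' (density B')" using B'(2) density_eq unfolding Dcal_def by auto
  define C where "C = {1..} - B'"
  have hC: "has_density C (1 - density B')" unfolding C_def by (rule compl_density[OF B1 hB])
  have AC: "A \<subseteq> C" using assms B'(1) unfolding C_def A'_def by auto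
  have CD: "C \<in> Dcal" using hC unfolding Dcal_def C_def by auto
  have "upper_dd A = density C"
    unfolding upper_dd_def
  proof (rule cInf_eq_minimum)
    show "density C \<in> {density C | C. A \<subseteq> C \<and> C \<in> Dcal}" using AC CD by blast
  next
    fix y assume "y \<in> {density C | C. A \<subseteq> C \<and> C \<in> Dcal}"
    then obtain C' where C': "y = density C'" "A \<subseteq> C'" "C' \<in> Dcal" by blast
    have C1: "C' \<subseteq> {1..}" "has_density C' (density C')" using C'(3) density_eq unfolding Dcal_def by auto
    define B'' where "B'' = {1..} - C'"
    have hB'': "has_density B'' (1 - density C')" unfolding B''_def by (rule compl_density[OF C1])
    have "B'' \<subseteq> A'" using C'(2) unfolding B''_def A'_def by auto
    moreover have "B'' \<in> Dcal" using hB'' unfolding Dcal_def B''_def by auto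
    ultimately have "density B'' \<le> lower_dd A'"
      unfolding lower_dd_def by (intro cSup_upper[OF _ bdd_dens]) blast
    hence "1 - density C' \<le> density B'" using density_eq[OF hB''] B'(3) by simp
    thus "density C \<le> y" using density_eq[OF hC] C'(1) by simp
  qed
  thus "\<exists>C. A \<subseteq> C \<and> C \<in> Dcal \<and> density C = upper_dd A" using AC CD by auto
qed

end
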